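(* Let $\phi:\mathbb{N}_0\to\mathbb{N}_0$ satisfy $\phi(0)=0$ and $\phi(x)\neq x$ for all $x\in\mathbb{N}$, and let $n\ge2$. Assume the local function $\phi_n$ has no cycle. Let $p_\nu=|\{x\in D_n: h(x)=\nu\}|$ for $1\le\nu\le n$, let $m=\max\{\nu\in\{1,\dots,n\}: p_\nu\ge1\}$, and $\pi=(p_1,\dots,p_m)$. Then $\pi$ is an ordered partition (composition) of $n$ of length $m$, $1\le m\le n$, with $p_1,\dots,p_m\ge1$. Moreover: (1) $M_n(\phi)$ is nilpotent of degree $m$. (2) For $1\le k\le m$, \[ M_n(\phi)^k=\sum_{x\in D_n:\ \phi_n^k(x)\in D_n} E_n(\phi_n^k(x),x),\qquad \#M_n(\phi)^k=n-\sum_{\nu=1}^k p_\nu. \] (3) Writing $\widehat{M}_n(\phi)^{-1}=(\mathbf{v}_1,\dots,\mathbf{v}_n)$ by columns, we have $\mathbf{v}_j=\mathbf{e}_j+\sum_{\nu=1}^{h(j)-1}\mathbf{e}_{\phi_n^\nu(j)}$ for $1\le j\le n$, and \[ \#\widehat{M}_n(\phi)^{-1}=\sum_{x\in D_n}h(x)=\sum_{\nu=1}^m\nu p_\nu\le nm-\binom{m}{2}. \]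
   Context: $\mathbb{N}=\{1,2,\dots\}$, $\mathbb{N}_0=\mathbb{N}\cup\{0\}$, $D_n=\{1,\dots,n\}$, $D_{n,0}=D_n\cup\{0\}$. The local function $\phi_n:D_{n,0}\to D_{n,0}$ is $\phi_n(x)=\phi(x)$ if $x\in D_n$ and $\phi(x)\in D_n$, and $\phi_n(x)=0$ otherwise. "$\phi_n$ has no cycle" means there are no $m\ge2$ and $x\in D_n$ with $\phi_n^m(x)=x$. The height of $x\in D_n$ is $h(x)=\min\{k\in\mathbb{N}:\phi_n^k(x)=0\}$. For $1\le i\le n$, $\mathbf{e}_i$ is the $i$-th unit vector in $\mathbb{Z}^n$ and $\mathbf{e}_0$ the zero vector; $E_n(i,j)=\mathbf{e}_i\mathbf{e}_j^t$. $M_n(\phi)$ is the $n\times n$ matrix whose $j$-th column is $\mathbf{e}_{\phi_n(j)}$, and $\widehat{M}_n(\phi)=I-M_n(\phi)$. $\#A$ denotes the number of nonzero entries of a matrix $A$. A matrix $A$ is nilpotent of degree $k$ if $A^k=0$ and $A^{k-1}\ne0$. *)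

theory Defs
  imports "Jordan_Normal_Form.Matrix"
begin

text \<open>Conventions: entries of the n x n integer matrices are indexed 0..n-1 in the library;
  the paper's index i in D_n = {1..n} corresponds to library index i - 1.\<close>

definition Dn :: "nat \<Rightarrow> nat set" where
  "Dn n = {1..n}"

definition loc :: "(nat \<Rightarrow> nat) \<Rightarrow> nat \<Rightarrow> nat \<Rightarrow> nat" where
  "loc \<phi> n x = (if x \<in> Dn n \<and> \<phi> x \<in> Dn n then \<phi> x else 0)"

definition no_cycle :: "(nat \<Rightarrow> nat) \<Rightarrow> nat \<Rightarrow> bool" where
  "no_cycle \<phi> n \<longleftrightarrow> \<not> (\<exists>m\<ge>2. \<exists>x\<in>Dn n. (loc \<phi> n ^^ m) x = x)"

definition height :: "(nat \<Rightarrow> nat) \<Rightarrow> nat \<Rightarrow> nat \<Rightarrow> nat" where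
  "height \<phi> n x = (LEAST k. k \<ge> 1 \<and> (loc \<phi> n ^^ k) x = 0)"

text \<open>Unit vector e_i in Z^n (i in D_n); e_0 is the zero vector.\<close>
definition uvec :: "nat \<Rightarrow> nat \<Rightarrow> int vec" where
  "uvec n i = vec n (\<lambda>r. if i \<ge> 1 \<and> r = i - 1 then 1 else 0)"

definition Emat :: "nat \<Rightarrow> nat \<Rightarrow> nat \<Rightarrow> int mat" where
  "Emat n i j = mat n n (\<lambda>(r, c). (uvec n i $ r) * (uvec n j $ c))"

definition Mmat :: "(nat \<Rightarrow> nat) \<Rightarrow> nat \<Rightarrow> int mat" where
  "Mmat \<phi> n = mat n n (\<lambda>(r, c). uvec n (loc \<phi> n (c + 1)) $ r)"

definition Mhat :: "(nat \<Rightarrow> nat) \<Rightarrow> nat \<Rightarrow> int mat" where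
  "Mhat \<phi> n = 1\<^sub>m n - Mmat \<phi> n"

definition nnz :: "int mat \<Rightarrow> nat" where
  "nnz A = card {(r, c). r < dim_row A \<and> c < dim_col A \<and> A $$ (r, c) \<noteq> 0}"

definition nilpotent_deg :: "int mat \<Rightarrow> nat \<Rightarrow> bool" where
  "nilpotent_deg A k \<longleftrightarrow> A ^\<^sub>m k = 0\<^sub>m (dim_row A) (dim_col A)
      \<and> A ^\<^sub>m (k - 1) \<noteq> 0\<^sub>m (dim_row A) (dim_col A)"

definition msum :: "nat \<Rightarrow> ('b \<Rightarrow> int mat) \<Rightarrow> 'b set \<Rightarrow> int mat" where
  "msum n f S = finprod (monoid_mat TYPE(int) n n) f S"

definition vsum :: "nat \<Rightarrow> ('b \<Rightarrow> int vec) \<Rightarrow> 'b set \<Rightarrow> int vec" where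
  "vsum n f S = finsum_vec TYPE(int) n f S"

end

theory Submission
  imports Defs
begin

lemma gauss2: "2 * (\<Sum>\<nu>=1..k. \<nu>) = k * (k + 1::nat)"
  by (induct k) auto

lemma bound_gen:
  fixes p :: "nat \<Rightarrow> nat" and m n :: nat
  assumes p_pos: "\<And>\<nu>. \<nu> \<in> {1..m} \<Longrightarrow> p \<nu> \<ge> 1" and sum_p: "(\<Sum>\<nu>=1..m. p \<nu>) = n"
  shows "(\<Sum>\<nu>=1..m. \<nu> * p \<nu>) \<le> n * m - (m choose 2)"
proof -
  define S where "S = (\<Sum>\<nu>=1..m. \<nu>)"
  define C where "C = m choose 2"
  define q where "q = (\<Sum>\<nu>=1..m. p \<nu> - 1)"
  have "(\<Sum>\<nu>=1..m. p \<nu>) = (\<Sum>\<nu>=1..m. (p \<nu> - 1) + 1)"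
  proof (rule sum.cong)
    fix x assume "x \<in> {1..m}" then have "p x \<ge> 1" by (rule p_pos)
    then show "p x = p x - 1 + 1" by simp
  qed simp
  also have "\<dots> = q + (\<Sum>\<nu>=1..m. 1)" unfolding q_def by (rule sum.distrib)
  also have "(\<Sum>\<nu>=1..m. (1::nat)) = m" by simp
  finally have q: "q + m = n" using sum_p by simp
  have "(\<Sum>\<nu>=1..m. \<nu> * p \<nu>) = (\<Sum>\<nu>=1..m. \<nu> * (p \<nu> - 1) + \<nu>)"
    by (rule sum.cong) (use p_pos in \<open>auto simp: algebra_simps\<close>)
  also have "\<dots> = (\<Sum>\<nu>=1..m. \<nu> * (p \<nu> - 1)) + S" unfolding S_def by (simp add: sum.distrib)
  also have "(\<Sum>\<nu>=1..m. \<nu> * (p \<nu> - 1)) \<le> (\<Sum>\<nu>=1..m. m * (p \<nu> - 1))"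
    by (rule sum_mono) auto
  also have "(\<Sum>\<nu>=1..m. m * (p \<nu> - 1)) = m * q" unfolding q_def by (rule sum_distrib_left[symmetric])
  finally have A: "(\<Sum>\<nu>=1..m. \<nu> * p \<nu>) \<le> m * q + S" by simp
  have S2: "2 * S = m * (m + 1)" unfolding S_def by (rule gauss2)
  have C2: "2 * C = m * (m - 1)"
  proof -
    have "2 * (k choose 2) = k * (k - 1)" for k :: nat
    proof (induct k)
      case (Suc k)
      have "Suc k choose 2 = (k choose 1) + (k choose 2)"
        using binomial_Suc_Suc[of k 1] by (simp add: numeral_2_eq_2)
      then show ?case using Suc by (cases k) (auto simp: algebra_simps)
    qed simp
    then show ?thesis unfolding C_def .
  qed
  have "2 * (S + C) = 2 * (m * m)"
  proof (cases m)
    case 0 then show ?thesis using S2 C2 by simp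
  next
    case (Suc k) then show ?thesis using S2 C2 by (simp add: algebra_simps)
  qed
  then have SC: "S + C = m * m" by simp
  have "m * q + m * m = m * (q + m)" by (simp add: algebra_simps)
  then have "m * q + m * m = n * m" using q by simp
  then have "m * q + S = n * m - C" using SC by linarith
  then show ?thesis using A unfolding C_def by simp
qed


lemma msum_index:
  assumes "finite S" "\<forall>x\<in>S. f x \<in> carrier_mat n n"
  shows "msum n f S \<in> carrier_mat n n \<and> (\<forall>i j. i < n \<longrightarrow> j < n \<longrightarrow> msum n f S $$ (i, j) = (\<Sum>x\<in>S. f x $$ (i, j)))"
  using assms
proof (induct S rule: finite_induct)
  case empty
  have "finprod (monoid_mat TYPE(int) n n) f {} = \<one>\<^bsub>monoid_mat TYPE(int) n n\<^esub>"
    by (rule comm_monoid.finprod_empty[OF comm_monoid_mat])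
  then have "msum n f {} = 0\<^sub>m n n" unfolding msum_def by (simp add: monoid_mat_def)
  then show ?case by simp
next
  case (insert x F)
  have fx: "f x \<in> carrier (monoid_mat TYPE(int) n n)" using insert by (auto simp: monoid_mat_def)
  have fF: "f \<in> F \<rightarrow> carrier (monoid_mat TYPE(int) n n)" using insert by (auto simp: monoid_mat_def)
  have eq: "msum n f (insert x F) = f x + msum n f F" unfolding msum_def
    using comm_monoid.finprod_insert[OF comm_monoid_mat insert(1,2) fF fx] by (simp add: monoid_mat_def)
  have IH: "msum n f F \<in> carrier_mat n n"
    "\<And>i j. i < n \<Longrightarrow> j < n \<Longrightarrow> msum n f F $$ (i, j) = (\<Sum>x\<in>F. f x $$ (i, j))"
    using insert by auto
  have fxc: "f x \<in> carrier_mat n n" using insert by auto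
  show ?case unfolding eq using IH fxc insert(1,2) by auto
qed

locale nc =
  fixes \<phi> :: "nat \<Rightarrow> nat" and n :: nat
  assumes nofix: "\<forall>x\<ge>1. \<phi> x \<noteq> x"
    and nocyc: "no_cycle \<phi> n"
    and n1: "1 \<le> n"
begin

abbreviation L where "L \<equiv> loc \<phi> n"
abbreviation h where "h \<equiv> height \<phi> n"

lemma L_range: "L x = 0 \<or> L x \<in> Dn n"
  unfolding loc_def by auto

lemma L0: "L 0 = 0" unfolding loc_def Dn_def by auto

lemma iter0: "(L ^^ k) 0 = 0"
  by (induct k) (auto simp: L0)

lemma iter_range: "x = 0 \<or> x \<in> Dn n \<Longrightarrow> (L ^^ k) x = 0 \<or> (L ^^ k) x \<in> Dn n"
  by (induct k) (use L_range in auto)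

lemma iter_add: "(L ^^ (k + j)) x = (L ^^ k) ((L ^^ j) x)"
  by (simp add: funpow_add)

lemma zero_mono: "(L ^^ k) x = 0 \<Longrightarrow> k \<le> j \<Longrightarrow> (L ^^ j) x = 0"
proof -
  assume a: "(L ^^ k) x = 0" "k \<le> j"
  then have "j = (j - k) + k" by simp
  then have "(L ^^ j) x = (L ^^ (j - k)) ((L ^^ k) x)" by (metis iter_add)
  then show ?thesis using a iter0 by simp
qed

lemma Dn_ge1: "x \<in> Dn n \<Longrightarrow> 1 \<le> x \<and> x \<le> n" unfolding Dn_def by auto

lemma no_repeat:
  assumes x: "x \<in> Dn n" and ij: "i < j" and eq: "(L ^^ j) x = (L ^^ i) x"
    and nz: "(L ^^ i) x \<noteq> 0"
  shows False
proof -
  define y where "y = (L ^^ i) x"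
  have y: "y \<in> Dn n" using iter_range[of x i] x nz unfolding y_def by auto
  have cy: "(L ^^ (j - i)) y = y"
    using eq iter_add[of "j - i" i x] ij unfolding y_def by simp
  have "j - i \<ge> 2 \<or> j - i = 1" using ij by linarith
  then show False
  proof
    assume "j - i \<ge> 2"
    then show False using cy nocyc y unfolding no_cycle_def by blast
  next
    assume a: "j - i = 1"
    then have "L y = y" using cy by simp
    then show False using y nofix Dn_ge1[OF y] unfolding loc_def by (auto split: if_splits)
  qed
qed

lemma reach_zero:
  assumes x: "x \<in> Dn n"
  shows "\<exists>k. 1 \<le> k \<and> k \<le> n \<and> (L ^^ k) x = 0"
proof (rule ccontr)
  assume na: "\<not> ?thesis"
  have nz: "\<forall>k\<le>n. (L ^^ k) x \<noteq> 0"
  proof (intro allI impI)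
    fix k assume "k \<le> n"
    show "(L ^^ k) x \<noteq> 0"
    proof (cases "k = 0")
      case True then show ?thesis using Dn_ge1[OF x] by simp
    next
      case False then show ?thesis using na \<open>k \<le> n\<close> by auto
    qed
  qed
  have sub: "(\<lambda>k. (L ^^ k) x) ` {0..n} \<subseteq> Dn n"
  proof (rule image_subsetI)
    fix k assume "k \<in> {0..n}" then show "(L ^^ k) x \<in> Dn n" using nz iter_range[of x k] x by auto
  qed
  have "\<not> inj_on (\<lambda>k. (L ^^ k) x) {0..n}"
  proof
    assume "inj_on (\<lambda>k. (L ^^ k) x) {0..n}"
    from card_inj_on_le[OF this sub] have "card {0..n} \<le> card (Dn n)"
      unfolding Dn_def by simp
    then show False unfolding Dn_def by simp
  qed
  then obtain i j where ij: "i \<in> {0..n}" "j \<in> {0..n}" "i \<noteq> j" "(L ^^ i) x = (L ^^ j) x"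
    unfolding inj_on_def by blast
  show False
  proof (cases "i < j")
    case True then show ?thesis using no_repeat[OF x True] ij nz by (metis atLeastAtMost_iff)
  next
    case False then have "j < i" using ij by simp
    then show ?thesis using no_repeat[OF x \<open>j < i\<close>] ij nz by (metis atLeastAtMost_iff)
  qed
qed

lemma h_props:
  assumes x: "x \<in> Dn n"
  shows "1 \<le> h x" "h x \<le> n" "(L ^^ h x) x = 0" "\<And>k. (L ^^ k) x = 0 \<longleftrightarrow> h x \<le> k"
proof -
  obtain k where k: "1 \<le> k" "k \<le> n" "(L ^^ k) x = 0" using reach_zero[OF x] by blast
  have P: "1 \<le> h x \<and> (L ^^ h x) x = 0"
    unfolding height_def by (rule LeastI[of _ k]) (use k in auto)
  have le: "h x \<le> k" unfolding height_def by (rule Least_le) (use k in auto)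
  show "1 \<le> h x" "(L ^^ h x) x = 0" using P by auto
  show "h x \<le> n" using le k by simp
  fix j
  show "(L ^^ j) x = 0 \<longleftrightarrow> h x \<le> j"
  proof
    assume j: "(L ^^ j) x = 0"
    have "j \<noteq> 0" using j Dn_ge1[OF x] by (cases j) auto
    then show "h x \<le> j" unfolding height_def by (intro Least_le) (use j in auto)
  next
    assume "h x \<le> j" then show "(L ^^ j) x = 0" using zero_mono P by blast
  qed
qed

lemma iter_in_Dn: "x \<in> Dn n \<Longrightarrow> k < h x \<Longrightarrow> (L ^^ k) x \<in> Dn n"
  using iter_range[of x k] h_props(4)[of x k] by auto

lemma height_iter:
  assumes x: "x \<in> Dn n" and i: "i < h x"
  shows "h ((L ^^ i) x) = h x - i"
proof -
  have y: "(L ^^ i) x \<in> Dn n" using iter_in_Dn[OF x i] .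
  have "\<And>k. h ((L ^^ i) x) \<le> k \<longleftrightarrow> h x - i \<le> k"
  proof -
    fix k
    have "h ((L ^^ i) x) \<le> k \<longleftrightarrow> (L ^^ k) ((L ^^ i) x) = 0" using h_props(4)[OF y] by simp
    also have "\<dots> \<longleftrightarrow> (L ^^ (k + i)) x = 0" by (simp add: iter_add)
    also have "\<dots> \<longleftrightarrow> h x \<le> k + i" using h_props(4)[OF x] by simp
    also have "\<dots> \<longleftrightarrow> h x - i \<le> k" by arith
    finally show "h ((L ^^ i) x) \<le> k \<longleftrightarrow> h x - i \<le> k" .
  qed
  then show ?thesis by (metis le_antisym order_refl)
qed

lemma orbit_inj:
  assumes x: "x \<in> Dn n" and i: "i < h x" and j: "j < h x" and eq: "(L ^^ i) x = (L ^^ j) x"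
  shows "i = j"
proof (rule ccontr)
  assume "i \<noteq> j"
  then consider "i < j" | "j < i" by linarith
  then show False
  proof cases
    case 1 then show ?thesis using no_repeat[OF x 1] eq iter_in_Dn[OF x i] Dn_ge1 by fastforce
  next
    case 2 then show ?thesis using no_repeat[OF x 2] eq iter_in_Dn[OF x j] Dn_ge1 by fastforce
  qed
qed

abbreviation p where "p \<nu> \<equiv> card {x \<in> Dn n. h x = \<nu>}"
abbreviation m where "m \<equiv> Max {\<nu> \<in> {1..n}. p \<nu> \<ge> 1}"

lemma finDn: "finite (Dn n)" unfolding Dn_def by simp
lemma cardDn: "card (Dn n) = n" unfolding Dn_def by simp

lemma hset: "{\<nu> \<in> {1..n}. p \<nu> \<ge> 1} = h ` Dn n"
proof
  show "{\<nu> \<in> {1..n}. p \<nu> \<ge> 1} \<subseteq> h ` Dn n"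
  proof
    fix \<nu> assume "\<nu> \<in> {\<nu> \<in> {1..n}. p \<nu> \<ge> 1}"
    then have "p \<nu> \<noteq> 0" by simp
    then have "{x \<in> Dn n. h x = \<nu>} \<noteq> {}" by (metis card.empty)
    then show "\<nu> \<in> h ` Dn n" by blast
  qed
next
  show "h ` Dn n \<subseteq> {\<nu> \<in> {1..n}. p \<nu> \<ge> 1}"
  proof
    fix \<nu> assume "\<nu> \<in> h ` Dn n"
    then obtain x where x: "x \<in> Dn n" "\<nu> = h x" by blast
    have "x \<in> {x \<in> Dn n. h x = \<nu>}" using x by simp
    moreover have "finite {x \<in> Dn n. h x = \<nu>}" using finDn by simp
    ultimately have "p \<nu> > 0" using card_gt_0_iff by blast
    then have "p \<nu> \<ge> 1" by simp
    then show "\<nu> \<in> {\<nu> \<in> {1..n}. p \<nu> \<ge> 1}" using h_props[OF x(1)] x by auto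
  qed
qed

lemma Dn_ne: "Dn n \<noteq> {}" using n1 unfolding Dn_def by auto

lemma m_eq: "m = Max (h ` Dn n)" using hset by simp

lemma m_in: "m \<in> h ` Dn n" unfolding m_eq using finDn Dn_ne by simp

lemma h_le_m: "x \<in> Dn n \<Longrightarrow> h x \<le> m" unfolding m_eq using finDn by simp

lemma m_bounds: "1 \<le> m" "m \<le> n"
  using m_in h_props by auto

lemma p_pos:
  assumes nu: "\<nu> \<in> {1..m}" shows "p \<nu> \<ge> 1"
proof -
  obtain x0 where x0: "x0 \<in> Dn n" "h x0 = m" using m_in by auto
  have lt: "m - \<nu> < h x0" using nu x0 by auto
  have "h ((L ^^ (m - \<nu>)) x0) = \<nu>" using height_iter[OF x0(1) lt] x0 nu by auto
  moreover have "(L ^^ (m - \<nu>)) x0 \<in> Dn n" using iter_in_Dn[OF x0(1) lt] .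
  ultimately have "\<nu> \<in> h ` Dn n" by (intro image_eqI[of _ h "(L ^^ (m - \<nu>)) x0"]) auto
  then show ?thesis using hset by auto
qed

lemma card_le_sum: "card {x \<in> Dn n. h x \<le> k} = (\<Sum>\<nu>=1..k. p \<nu>)"
proof (induct k)
  case 0
  have e: "{x \<in> Dn n. h x \<le> 0} = {}" using h_props(1) by fastforce
  show ?case by (simp only: e card.empty) simp
next
  case (Suc k)
  have eq: "{x \<in> Dn n. h x \<le> Suc k} = {x \<in> Dn n. h x \<le> k} \<union> {x \<in> Dn n. h x = Suc k}" by auto
  have "card {x \<in> Dn n. h x \<le> Suc k} = card {x \<in> Dn n. h x \<le> k} + p (Suc k)"
    unfolding eq by (rule card_Un_disjoint) (use finDn in auto)
  then show ?case using Suc by simp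
qed

lemma card_gt: "card {x \<in> Dn n. k < h x} = n - (\<Sum>\<nu>=1..k. p \<nu>)"
proof -
  have eq: "Dn n = {x \<in> Dn n. h x \<le> k} \<union> {x \<in> Dn n. k < h x}" by auto
  have "card (Dn n) = card {x \<in> Dn n. h x \<le> k} + card {x \<in> Dn n. k < h x}"
    by (subst eq, rule card_Un_disjoint) (use finDn in auto)
  then have "n = card {x \<in> Dn n. h x \<le> k} + card {x \<in> Dn n. k < h x}" using cardDn by simp
  then show ?thesis using card_le_sum by simp
qed

lemma sum_p: "(\<Sum>\<nu>=1..m. p \<nu>) = n"
proof -
  have "{x \<in> Dn n. h x \<le> m} = Dn n" using h_le_m by auto
  then show ?thesis using card_le_sum[of m] cardDn by simp
qed

lemma sum_h: "(\<Sum>x\<in>Dn n. h x) = (\<Sum>\<nu>=1..m. \<nu> * p \<nu>)"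
proof -
  have sub: "h ` Dn n \<subseteq> {1..m}" using h_le_m h_props(1) by auto
  have "(\<Sum>x\<in>Dn n. h x) = (\<Sum>\<nu>\<in>{1..m}. \<Sum>x\<in>{x \<in> Dn n. h x = \<nu>}. h x)"
    using sum.group[OF finDn _ sub, of h] by simp
  also have "\<dots> = (\<Sum>\<nu>=1..m. \<nu> * p \<nu>)"
    by (rule sum.cong) auto
  finally show ?thesis .
qed

lemma bound: "(\<Sum>\<nu>=1..m. \<nu> * p \<nu>) \<le> n * m - (m choose 2)"
  by (rule bound_gen[OF p_pos sum_p])


definition ind :: "nat \<Rightarrow> nat \<Rightarrow> nat \<Rightarrow> int" where
  "ind k r c = (if (L ^^ k) (c + 1) = r + 1 then 1 else 0)"

lemma M_carrier: "Mmat \<phi> n \<in> carrier_mat n n" unfolding Mmat_def by simp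

lemma M_index: "r < n \<Longrightarrow> c < n \<Longrightarrow> Mmat \<phi> n $$ (r, c) = ind 1 r c"
  unfolding Mmat_def uvec_def ind_def by auto

lemma cDn: "c < n \<Longrightarrow> c + 1 \<in> Dn n" unfolding Dn_def by simp

lemma right_step:
  assumes r: "r < n" and c: "c < n"
  shows "(\<Sum>s\<in>{0..<n}. ind k r s * ind 1 s c) = ind (Suc k) r c"
proof (cases "L (c + 1) = 0")
  case True
  have "(L ^^ Suc k) (c + 1) = (L ^^ k) (L (c + 1))" by (simp add: funpow_Suc_right del: funpow.simps)
  then have "(L ^^ Suc k) (c + 1) = 0" using True iter0 by simp
  then have rhs: "ind (Suc k) r c = 0" unfolding ind_def by simp
  have z: "\<And>s. ind 1 s c = 0" unfolding ind_def using True by simp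
  have "(\<Sum>s\<in>{0..<n}. ind k r s * ind 1 s c) = 0"
  proof (rule sum.neutral)
    show "\<forall>x\<in>{0..<n}. ind k r x * ind 1 x c = 0"
    proof
      fix x show "ind k r x * ind 1 x c = 0" by (simp only: z mult_zero_right)
    qed
  qed
  then show ?thesis using rhs by (simp only:)
next
  case False
  then have "L (c + 1) \<in> Dn n" using L_range[of "c+1"] by auto
  then have "L (c + 1) = (L (c + 1) - 1) + 1" "L (c + 1) - 1 < n" unfolding Dn_def by auto
  then obtain t where t: "L (c + 1) = t + 1" "t < n" by blast
  have "(\<Sum>s\<in>{0..<n}. ind k r s * ind 1 s c) = (\<Sum>s\<in>{0..<n}. if s = t then ind k r t else 0)"
    by (rule sum.cong) (use t in \<open>auto simp: ind_def\<close>)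
  also have "\<dots> = ind k r t" using t by simp
  also have "\<dots> = ind (Suc k) r c"
  proof -
    have "(L ^^ Suc k) (c + 1) = (L ^^ k) (L (c + 1))" by (simp add: funpow_Suc_right del: funpow.simps)
    then show ?thesis using t unfolding ind_def by simp
  qed
  finally show ?thesis .
qed

lemma left_step:
  assumes r: "r < n" and c: "c < n"
  shows "(\<Sum>s\<in>{0..<n}. ind 1 r s * ind k s c) = ind (Suc k) r c"
proof (cases "(L ^^ k) (c + 1) = 0")
  case True
  then have "(L ^^ Suc k) (c + 1) = 0" using L0 by simp
  then show ?thesis using True unfolding ind_def by simp
next
  case False
  then have "(L ^^ k) (c + 1) \<in> Dn n" using iter_range[of "c+1" k] cDn[OF c] by auto
  then have "(L ^^ k) (c + 1) = ((L ^^ k) (c + 1) - 1) + 1" "(L ^^ k) (c + 1) - 1 < n" unfolding Dn_def by auto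
  then obtain t where t: "(L ^^ k) (c + 1) = t + 1" "t < n" by blast
  have "(\<Sum>s\<in>{0..<n}. ind 1 r s * ind k s c) = (\<Sum>s\<in>{0..<n}. if s = t then ind 1 r t else 0)"
    by (rule sum.cong) (use t in \<open>auto simp: ind_def\<close>)
  also have "\<dots> = ind 1 r t" using t by simp
  also have "\<dots> = ind (Suc k) r c" using t unfolding ind_def by simp
  finally show ?thesis .
qed

lemma Mpow_index: "r < n \<Longrightarrow> c < n \<Longrightarrow> (Mmat \<phi> n ^\<^sub>m k) $$ (r, c) = ind k r c"
proof (induct k arbitrary: r c)
  case 0
  then show ?case using M_carrier unfolding ind_def by auto
next
  case (Suc k)
  have "(Mmat \<phi> n ^\<^sub>m Suc k) $$ (r, c) = row (Mmat \<phi> n ^\<^sub>m k) r \<bullet> col (Mmat \<phi> n) c"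
    using Suc.prems M_carrier by simp
  also have "\<dots> = (\<Sum>s\<in>{0..<n}. ind k r s * ind 1 s c)"
    unfolding scalar_prod_def using Suc M_carrier by (auto intro!: sum.cong simp: M_index)
  also have "\<dots> = ind (Suc k) r c" by (rule right_step[OF Suc.prems])
  finally show ?case .
qed

lemma ind_zero: assumes c: "c < n" and hk: "h (c + 1) \<le> k" shows "ind k r c = 0"
proof -
  have "(L ^^ k) (c + 1) = 0" using h_props(4)[OF cDn[OF c], of k] hk by simp
  then show ?thesis unfolding ind_def by simp
qed


lemma ind_alt: fixes y r :: nat shows "(if y \<ge> 1 \<and> r = y - 1 then 1 else 0) = (if y = r + 1 then 1 else (0::int))"
  by auto

lemma Emat_sum:
  assumes r: "r < n" and c: "c < n"
  shows "(\<Sum>x\<in>{x \<in> Dn n. (L ^^ k) x \<in> Dn n}. Emat n ((L ^^ k) x) x $$ (r, c)) = ind k r c"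
proof -
  let ?S = "{x \<in> Dn n. (L ^^ k) x \<in> Dn n}"
  have "(\<Sum>x\<in>?S. Emat n ((L ^^ k) x) x $$ (r, c)) = (\<Sum>x\<in>?S. if x = c + 1 then ind k r c else 0)"
  proof (rule sum.cong)
    fix x assume x: "x \<in> ?S"
    have "Emat n ((L ^^ k) x) x $$ (r, c)
       = (if (L ^^ k) x = r + 1 then 1 else 0) * (if x = c + 1 then 1 else (0::int))"
      unfolding Emat_def uvec_def using r c by (simp add: ind_alt)
    then show "Emat n ((L ^^ k) x) x $$ (r, c) = (if x = c + 1 then ind k r c else 0)"
      unfolding ind_def by auto
  qed simp
  also have "\<dots> = (if c + 1 \<in> ?S then ind k r c else 0)"
    using finDn by (simp add: sum.delta')
  also have "\<dots> = ind k r c"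
  proof (cases "c + 1 \<in> ?S")
    case False
    then have "(L ^^ k) (c + 1) \<noteq> r + 1" using cDn[OF c] cDn[OF r] by auto
    then show ?thesis using False unfolding ind_def by simp
  qed simp
  finally show ?thesis .
qed

lemma Emat_carrier: "Emat n i j \<in> carrier_mat n n" unfolding Emat_def by simp

lemma Mpow_msum: "Mmat \<phi> n ^\<^sub>m k = msum n (\<lambda>x. Emat n ((L ^^ k) x) x) {x \<in> Dn n. (L ^^ k) x \<in> Dn n}"
proof -
  have fin: "finite {x \<in> Dn n. (L ^^ k) x \<in> Dn n}" using finDn by simp
  note ms = msum_index[OF fin, of "\<lambda>x. Emat n ((L ^^ k) x) x"]
  have ms1: "msum n (\<lambda>x. Emat n ((L ^^ k) x) x) {x \<in> Dn n. (L ^^ k) x \<in> Dn n} \<in> carrier_mat n n"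
    using ms Emat_carrier by blast
  show ?thesis
  proof (rule eq_matI)
    fix i j assume ij: "i < dim_row (msum n (\<lambda>x. Emat n ((L ^^ k) x) x) {x \<in> Dn n. (L ^^ k) x \<in> Dn n})"
      "j < dim_col (msum n (\<lambda>x. Emat n ((L ^^ k) x) x) {x \<in> Dn n. (L ^^ k) x \<in> Dn n})"
    then have ij': "i < n" "j < n" using ms1 by auto
    show "(Mmat \<phi> n ^\<^sub>m k) $$ (i, j) = msum n (\<lambda>x. Emat n ((L ^^ k) x) x) {x \<in> Dn n. (L ^^ k) x \<in> Dn n} $$ (i, j)"
      using ms Emat_carrier ij' Mpow_index Emat_sum by simp
  qed (use ms1 M_carrier in auto)
qed

lemma nnz_pow: "nnz (Mmat \<phi> n ^\<^sub>m k) = card {x \<in> Dn n. k < h x}"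
proof -
  have dims: "dim_row (Mmat \<phi> n ^\<^sub>m k) = n" "dim_col (Mmat \<phi> n ^\<^sub>m k) = n" using M_carrier by auto
  have "{(r, c). r < dim_row (Mmat \<phi> n ^\<^sub>m k) \<and> c < dim_col (Mmat \<phi> n ^\<^sub>m k) \<and> (Mmat \<phi> n ^\<^sub>m k) $$ (r, c) \<noteq> 0}
      = (\<lambda>x. ((L ^^ k) x - 1, x - 1)) ` {x \<in> Dn n. k < h x}" (is "?A = ?B")
  proof (intro equalityI subsetI)
    fix rc assume "rc \<in> ?A"
    then obtain r c where rc: "rc = (r, c)" "r < n" "c < n" "ind k r c \<noteq> 0"
      using dims Mpow_index by auto
    then have e: "(L ^^ k) (c + 1) = r + 1" unfolding ind_def by (auto split: if_splits)
    then have "k < h (c + 1)" using h_props(4)[OF cDn[OF rc(3)], of k] by auto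
    then show "rc \<in> ?B" using rc e cDn[OF rc(3)] by (intro image_eqI[of _ _ "c + 1"]) auto
  next
    fix rc assume "rc \<in> ?B"
    then obtain x where x: "x \<in> Dn n" "k < h x" "rc = ((L ^^ k) x - 1, x - 1)" by auto
    have y: "(L ^^ k) x \<in> Dn n" using iter_in_Dn[OF x(1,2)] .
    have "ind k ((L ^^ k) x - 1) (x - 1) = 1" using x(1) y unfolding ind_def Dn_def by auto
    then show "rc \<in> ?A" using x y dims Mpow_index unfolding Dn_def by auto
  qed
  moreover have "inj_on (\<lambda>x. ((L ^^ k) x - 1, x - 1)) {x \<in> Dn n. k < h x}"
    by (auto simp: inj_on_def Dn_def)
  ultimately show ?thesis unfolding nnz_def by (simp add: card_image)
qed

lemma Mpow_m: "Mmat \<phi> n ^\<^sub>m m = 0\<^sub>m n n"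
proof (rule eq_matI)
  fix i j assume "i < dim_row (0\<^sub>m n n :: int mat)" "j < dim_col (0\<^sub>m n n :: int mat)"
  then have ij: "i < n" "j < n" by auto
  then show "(Mmat \<phi> n ^\<^sub>m m) $$ (i, j) = (0\<^sub>m n n :: int mat) $$ (i, j)"
    using Mpow_index ind_zero h_le_m[OF cDn[OF ij(2)]] by simp
qed (use M_carrier in auto)

lemma Mpow_m1: "Mmat \<phi> n ^\<^sub>m (m - 1) \<noteq> 0\<^sub>m n n"
proof
  assume a: "Mmat \<phi> n ^\<^sub>m (m - 1) = 0\<^sub>m n n"
  obtain x0 where x0: "x0 \<in> Dn n" "h x0 = m" using m_in by auto
  have lt: "m - 1 < h x0" using x0 m_bounds by simp
  have y: "(L ^^ (m - 1)) x0 \<in> Dn n" using iter_in_Dn[OF x0(1) lt] .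
  have r: "(L ^^ (m - 1)) x0 - 1 < n" and c: "x0 - 1 < n" using y x0 unfolding Dn_def by auto
  have "ind (m - 1) ((L ^^ (m - 1)) x0 - 1) (x0 - 1) = 1" using x0(1) y unfolding ind_def Dn_def by auto
  then have "(Mmat \<phi> n ^\<^sub>m (m - 1)) $$ ((L ^^ (m - 1)) x0 - 1, x0 - 1) = 1" using Mpow_index[OF r c] by simp
  then show False using a r c by simp
qed

definition Vm :: "int mat" where
  "Vm = mat n n (\<lambda>(r, c). \<Sum>k<m. ind k r c)"

lemma V_carrier: "Vm \<in> carrier_mat n n" unfolding Vm_def by simp

lemma V_index: "r < n \<Longrightarrow> c < n \<Longrightarrow> Vm $$ (r, c) = (\<Sum>k<m. ind k r c)"
  unfolding Vm_def by simp

lemma Mhat_carrier: "Mhat \<phi> n \<in> carrier_mat n n" using M_carrier unfolding Mhat_def carrier_mat_def by simp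

lemma Mhat_index: "r < n \<Longrightarrow> s < n \<Longrightarrow> Mhat \<phi> n $$ (r, s) = (if r = s then 1 else 0) - ind 1 r s"
  unfolding Mhat_def using M_carrier M_index by simp

lemma ind0: "ind 0 r c = (if r = c then 1 else 0)" unfolding ind_def by simp

lemma ind_m: "c < n \<Longrightarrow> ind m r c = 0" using ind_zero h_le_m[OF cDn] by simp

lemma MV: "Mhat \<phi> n * Vm = 1\<^sub>m n"
proof (rule eq_matI)
  fix r c assume "r < dim_row (1\<^sub>m n :: int mat)" "c < dim_col (1\<^sub>m n :: int mat)"
  then have r: "r < n" and c: "c < n" by auto
  have "(Mhat \<phi> n * Vm) $$ (r, c) = (\<Sum>s\<in>{0..<n}. ((if r = s then 1 else 0) - ind 1 r s) * (\<Sum>k<m. ind k s c))"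
    using r c Mhat_carrier V_carrier by (auto simp: scalar_prod_def Mhat_index V_index intro!: sum.cong)
  also have "\<dots> = (\<Sum>s\<in>{0..<n}. (if r = s then 1 else 0) * (\<Sum>k<m. ind k s c)) - (\<Sum>s\<in>{0..<n}. ind 1 r s * (\<Sum>k<m. ind k s c))"
    by (simp add: left_diff_distrib sum_subtractf)
  also have "(\<Sum>s\<in>{0..<n}. (if r = s then 1 else 0) * (\<Sum>k<m. ind k s c)) = (\<Sum>k<m. ind k r c)"
  proof -
    have "(\<Sum>s\<in>{0..<n}. (if r = s then 1 else 0) * (\<Sum>k<m. ind k s c)) = (\<Sum>s\<in>{0..<n}. if s = r then (\<Sum>k<m. ind k s c) else 0)"
      by (rule sum.cong) auto
    then show ?thesis using r by simp
  qed
  also have "(\<Sum>s\<in>{0..<n}. ind 1 r s * (\<Sum>k<m. ind k s c)) = (\<Sum>k<m. ind (Suc k) r c)"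
  proof -
    have "(\<Sum>s\<in>{0..<n}. ind 1 r s * (\<Sum>k<m. ind k s c)) = (\<Sum>s\<in>{0..<n}. \<Sum>k<m. ind 1 r s * ind k s c)"
      by (simp add: sum_distrib_left)
    also have "\<dots> = (\<Sum>k<m. \<Sum>s\<in>{0..<n}. ind 1 r s * ind k s c)" by (rule sum.swap)
    also have "\<dots> = (\<Sum>k<m. ind (Suc k) r c)" using left_step[OF r c] by simp
    finally show ?thesis .
  qed
  also have "(\<Sum>k<m. ind k r c) - (\<Sum>k<m. ind (Suc k) r c) = ind 0 r c - ind m r c"
    unfolding sum_subtractf[symmetric] by (rule sum_lessThan_telescope'[of "\<lambda>k. ind k r c"])
  also have "\<dots> = (1\<^sub>m n :: int mat) $$ (r, c)" using r c ind0 ind_m by simp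
  finally show "(Mhat \<phi> n * Vm) $$ (r, c) = (1\<^sub>m n :: int mat) $$ (r, c)" .
qed (use Mhat_carrier V_carrier in auto)

lemma VM: "Vm * Mhat \<phi> n = 1\<^sub>m n"
proof (rule eq_matI)
  fix r c assume "r < dim_row (1\<^sub>m n :: int mat)" "c < dim_col (1\<^sub>m n :: int mat)"
  then have r: "r < n" and c: "c < n" by auto
  have "(Vm * Mhat \<phi> n) $$ (r, c) = (\<Sum>s\<in>{0..<n}. (\<Sum>k<m. ind k r s) * ((if s = c then 1 else 0) - ind 1 s c))"
    using r c Mhat_carrier V_carrier by (auto simp: scalar_prod_def Mhat_index V_index intro!: sum.cong)
  also have "\<dots> = (\<Sum>s\<in>{0..<n}. (\<Sum>k<m. ind k r s) * (if s = c then 1 else 0)) - (\<Sum>s\<in>{0..<n}. (\<Sum>k<m. ind k r s) * ind 1 s c)"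
    by (simp add: right_diff_distrib sum_subtractf)
  also have "(\<Sum>s\<in>{0..<n}. (\<Sum>k<m. ind k r s) * (if s = c then 1 else 0)) = (\<Sum>k<m. ind k r c)"
  proof -
    have "(\<Sum>s\<in>{0..<n}. (\<Sum>k<m. ind k r s) * (if s = c then 1 else 0)) = (\<Sum>s\<in>{0..<n}. if s = c then (\<Sum>k<m. ind k r s) else 0)"
      by (rule sum.cong) auto
    then show ?thesis using c by simp
  qed
  also have "(\<Sum>s\<in>{0..<n}. (\<Sum>k<m. ind k r s) * ind 1 s c) = (\<Sum>k<m. ind (Suc k) r c)"
  proof -
    have "(\<Sum>s\<in>{0..<n}. (\<Sum>k<m. ind k r s) * ind 1 s c) = (\<Sum>s\<in>{0..<n}. \<Sum>k<m. ind k r s * ind 1 s c)"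
      by (simp add: sum_distrib_right)
    also have "\<dots> = (\<Sum>k<m. \<Sum>s\<in>{0..<n}. ind k r s * ind 1 s c)" by (rule sum.swap)
    also have "\<dots> = (\<Sum>k<m. ind (Suc k) r c)" using right_step[OF r c] by simp
    finally show ?thesis .
  qed
  also have "(\<Sum>k<m. ind k r c) - (\<Sum>k<m. ind (Suc k) r c) = ind 0 r c - ind m r c"
    unfolding sum_subtractf[symmetric] by (rule sum_lessThan_telescope'[of "\<lambda>k. ind k r c"])
  also have "\<dots> = (1\<^sub>m n :: int mat) $$ (r, c)" using r c ind0 ind_m by simp
  finally show "(Vm * Mhat \<phi> n) $$ (r, c) = (1\<^sub>m n :: int mat) $$ (r, c)" .
qed (use Mhat_carrier V_carrier in auto)

lemma V_sum_h: "c < n \<Longrightarrow> (\<Sum>k<m. ind k r c) = (\<Sum>k<h (c + 1). ind k r c)"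
proof -
  assume c: "c < n"
  have sub: "{..<h (c + 1)} \<subseteq> {..<m}" using h_le_m[OF cDn[OF c]] by auto
  show ?thesis
    by (rule sum.mono_neutral_right[OF _ sub]) (use ind_zero[OF c] in auto)
qed

lemma V_col:
  assumes j: "j \<in> Dn n"
  shows "col Vm (j - 1) = uvec n j + vsum n (\<lambda>\<nu>. uvec n ((L ^^ \<nu>) j)) {1..h j - 1}"
proof -
  have uc: "\<And>i. uvec n i \<in> carrier_vec n" unfolding uvec_def by simp
  have vs: "vsum n (\<lambda>\<nu>. uvec n ((L ^^ \<nu>) j)) {1..h j - 1} \<in> carrier_vec n"
    unfolding vsum_def by (rule finsum_vec_closed) (use uc in auto)
  have jn: "j - 1 < n" and j1: "j - 1 + 1 = j" using j unfolding Dn_def by auto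
  show ?thesis
  proof (rule eq_vecI)
    fix r assume "r < dim_vec (uvec n j + vsum n (\<lambda>\<nu>. uvec n ((L ^^ \<nu>) j)) {1..h j - 1})"
    then have r: "r < n" using vs uc by auto
    have lhs: "col Vm (j - 1) $ r = (\<Sum>k<h j. ind k r (j - 1))"
      using r jn V_carrier V_index V_sum_h[OF jn] j1 by simp
    have "vsum n (\<lambda>\<nu>. uvec n ((L ^^ \<nu>) j)) {1..h j - 1} $ r = (\<Sum>\<nu>\<in>{1..h j - 1}. uvec n ((L ^^ \<nu>) j) $ r)"
      unfolding vsum_def by (rule index_finsum_vec) (use r uc in auto)
    also have "\<dots> = (\<Sum>\<nu>\<in>{1..h j - 1}. ind \<nu> r (j - 1))"
      unfolding uvec_def ind_def using r j1 by (intro sum.cong refl) auto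
    finally have v: "vsum n (\<lambda>\<nu>. uvec n ((L ^^ \<nu>) j)) {1..h j - 1} $ r = (\<Sum>\<nu>\<in>{1..h j - 1}. ind \<nu> r (j - 1))" .
    have u: "uvec n j $ r = ind 0 r (j - 1)" unfolding uvec_def ind_def using r j1 by (simp add: ind_alt)
    have set: "{..<h j} = insert 0 {1..h j - 1}" using h_props(1)[OF j] by auto
    have "(\<Sum>k<h j. ind k r (j - 1)) = ind 0 r (j - 1) + (\<Sum>\<nu>\<in>{1..h j - 1}. ind \<nu> r (j - 1))"
      unfolding set by (subst sum.insert) auto
    then show "col Vm (j - 1) $ r = (uvec n j + vsum n (\<lambda>\<nu>. uvec n ((L ^^ \<nu>) j)) {1..h j - 1}) $ r"
      using lhs u v r vs by simp
  qed (use vs uc V_carrier jn in auto)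
qed

lemma nnz_V: "nnz Vm = (\<Sum>x\<in>Dn n. h x)"
proof -
  have dims: "dim_row Vm = n" "dim_col Vm = n" using V_carrier by auto
  have nz: "Vm $$ (r, c) \<noteq> 0 \<longleftrightarrow> (\<exists>k<h (c + 1). (L ^^ k) (c + 1) = r + 1)" if r: "r < n" and c: "c < n" for r c
  proof -
    have "Vm $$ (r, c) = (\<Sum>k<h (c + 1). ind k r c)" using V_index[OF r c] V_sum_h[OF c] by simp
    moreover have "(\<Sum>k<h (c + 1). ind k r c) = 0 \<longleftrightarrow> (\<forall>k\<in>{..<h (c + 1)}. ind k r c = 0)"
      by (rule sum_nonneg_eq_0_iff) (auto simp: ind_def)
    ultimately show ?thesis unfolding ind_def by auto
  qed
  let ?f = "\<lambda>(x, k). ((L ^^ k) x - 1, x - 1)"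
  have "{(r, c). r < dim_row Vm \<and> c < dim_col Vm \<and> Vm $$ (r, c) \<noteq> 0} = ?f ` (SIGMA x:Dn n. {..<h x})" (is "?A = ?B")
  proof (intro equalityI subsetI)
    fix rc assume "rc \<in> ?A"
    then obtain r c where rc: "rc = (r, c)" "r < n" "c < n" "Vm $$ (r, c) \<noteq> 0" using dims by auto
    then obtain k where k: "k < h (c + 1)" "(L ^^ k) (c + 1) = r + 1" using nz by blast
    show "rc \<in> ?B" using rc k cDn[OF rc(3)] by (intro image_eqI[of _ _ "(c + 1, k)"]) auto
  next
    fix rc assume "rc \<in> ?B"
    then obtain x k where x: "x \<in> Dn n" "k < h x" "rc = ((L ^^ k) x - 1, x - 1)" by auto
    have y: "(L ^^ k) x \<in> Dn n" using iter_in_Dn[OF x(1,2)] .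
    have r: "(L ^^ k) x - 1 < n" and c: "x - 1 < n" and c1: "x - 1 + 1 = x" and r1: "(L ^^ k) x - 1 + 1 = (L ^^ k) x"
      using x y unfolding Dn_def by auto
    have "Vm $$ ((L ^^ k) x - 1, x - 1) \<noteq> 0" using nz[OF r c] x(2) c1 r1 by auto
    then show "rc \<in> ?A" using x r c dims by auto
  qed
  moreover have "inj_on ?f (SIGMA x:Dn n. {..<h x})"
  proof (rule inj_onI)
    fix a b assume a: "a \<in> (SIGMA x:Dn n. {..<h x})" and b: "b \<in> (SIGMA x:Dn n. {..<h x})" and e: "?f a = ?f b"
    obtain x k where ak: "a = (x, k)" "x \<in> Dn n" "k < h x" using a by auto
    obtain x' k' where bk: "b = (x', k')" "x' \<in> Dn n" "k' < h x'" using b by auto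
    have xx: "x = x'" using e ak bk unfolding Dn_def by auto
    have y1: "(L ^^ k) x \<in> Dn n" using iter_in_Dn[OF ak(2,3)] .
    have y2: "(L ^^ k') x \<in> Dn n" using iter_in_Dn[OF bk(2,3)] xx by simp
    have "(L ^^ k) x = (L ^^ k') x" using e ak bk xx y1 y2 unfolding Dn_def by auto
    then have "k = k'" using orbit_inj[OF ak(2,3)] bk(3) xx by simp
    then show "a = b" using ak bk xx by simp
  qed
  ultimately have "nnz Vm = card (SIGMA x:Dn n. {..<h x})" unfolding nnz_def by (simp add: card_image)
  also have "\<dots> = (\<Sum>x\<in>Dn n. h x)" using finDn by (simp add: card_SigmaI)
  finally show ?thesis .
qed

end

theorem theorem1p7:
  fixes \<phi> :: "nat \<Rightarrow> nat" and n :: nat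
  assumes phi0: "\<phi> 0 = 0"
    and nofix: "\<forall>x\<ge>1. \<phi> x \<noteq> x"
    and n2: "n \<ge> 2"
    and nocyc: "no_cycle \<phi> n"
  defines "p \<equiv> (\<lambda>\<nu>. card {x \<in> Dn n. height \<phi> n x = \<nu>})"
  defines "m \<equiv> Max {\<nu> \<in> {1..n}. p \<nu> \<ge> 1}"
  shows "1 \<le> m \<and> m \<le> n \<and> (\<forall>\<nu>\<in>{1..m}. p \<nu> \<ge> 1) \<and> (\<Sum>\<nu>=1..m. p \<nu>) = n
         \<and> nilpotent_deg (Mmat \<phi> n) m
         \<and> (\<forall>k\<in>{1..m}.
           Mmat \<phi> n ^\<^sub>m k
             = msum n (\<lambda>x. Emat n ((loc \<phi> n ^^ k) x) x) {x \<in> Dn n. (loc \<phi> n ^^ k) x \<in> Dn n}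
         \<and> nnz (Mmat \<phi> n ^\<^sub>m k) = n - (\<Sum>\<nu>=1..k. p \<nu>))
         \<and> (\<exists>V \<in> carrier_mat n n. Mhat \<phi> n * V = 1\<^sub>m n \<and> V * Mhat \<phi> n = 1\<^sub>m n
         \<and> (\<forall>j\<in>Dn n. col V (j - 1)
               = uvec n j + vsum n (\<lambda>\<nu>. uvec n ((loc \<phi> n ^^ \<nu>) j)) {1..height \<phi> n j - 1})
         \<and> nnz V = (\<Sum>x\<in>Dn n. height \<phi> n x)
         \<and> (\<Sum>x\<in>Dn n. height \<phi> n x) = (\<Sum>\<nu>=1..m. \<nu> * p \<nu>)
         \<and> (\<Sum>\<nu>=1..m. \<nu> * p \<nu>) \<le> n * m - (m choose 2))"
proof -
  interpret nc \<phi> n by unfold_locales (use nofix nocyc n2 in auto)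
  have nil: "nilpotent_deg (Mmat \<phi> n) (nc.m \<phi> n)"
    unfolding nilpotent_deg_def using Mpow_m Mpow_m1 M_carrier by auto
  have pp: "\<forall>\<nu>\<in>{1..nc.m \<phi> n}. nc.p \<phi> n \<nu> \<ge> 1" using p_pos by blast
  have A: "\<forall>k\<in>{1..nc.m \<phi> n}.
           Mmat \<phi> n ^\<^sub>m k
             = msum n (\<lambda>x. Emat n ((loc \<phi> n ^^ k) x) x) {x \<in> Dn n. (loc \<phi> n ^^ k) x \<in> Dn n}
         \<and> nnz (Mmat \<phi> n ^\<^sub>m k) = n - (\<Sum>\<nu>=1..k. nc.p \<phi> n \<nu>)"
  proof
    fix k show "Mmat \<phi> n ^\<^sub>m k
             = msum n (\<lambda>x. Emat n ((loc \<phi> n ^^ k) x) x) {x \<in> Dn n. (loc \<phi> n ^^ k) x \<in> Dn n}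
         \<and> nnz (Mmat \<phi> n ^\<^sub>m k) = n - (\<Sum>\<nu>=1..k. nc.p \<phi> n \<nu>)"
      using Mpow_msum[of k] nnz_pow[of k] card_gt[of k] by simp
  qed
  have B: "\<exists>V \<in> carrier_mat n n. Mhat \<phi> n * V = 1\<^sub>m n \<and> V * Mhat \<phi> n = 1\<^sub>m n
         \<and> (\<forall>j\<in>Dn n. col V (j - 1)
               = uvec n j + vsum n (\<lambda>\<nu>. uvec n ((loc \<phi> n ^^ \<nu>) j)) {1..height \<phi> n j - 1})
         \<and> nnz V = (\<Sum>x\<in>Dn n. height \<phi> n x)
         \<and> (\<Sum>x\<in>Dn n. height \<phi> n x) = (\<Sum>\<nu>=1..nc.m \<phi> n. \<nu> * nc.p \<phi> n \<nu>)
         \<and> (\<Sum>\<nu>=1..nc.m \<phi> n. \<nu> * nc.p \<phi> n \<nu>) \<le> n * nc.m \<phi> n - (nc.m \<phi> n choose 2)"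
  proof (rule bexI[OF _ V_carrier], intro conjI)
    show "\<forall>j\<in>Dn n. col Vm (j - 1)
               = uvec n j + vsum n (\<lambda>\<nu>. uvec n ((loc \<phi> n ^^ \<nu>) j)) {1..height \<phi> n j - 1}"
      using V_col by blast
  qed (rule MV VM nnz_V sum_h bound)+
  show ?thesis unfolding p_def m_def
    using m_bounds pp sum_p nil A B by (intro conjI) (assumption+)
qed
end
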